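(* For every quasiordered set $(A,\gamma)$, $$\mathrm{hsdim}(A,\gamma)\le\dim\bigl(A/(\gamma\cap\gamma^{-1}),r_\gamma\bigr).$$
   Context: A quasiorder on $A$ is a reflexive and transitive relation; $\Delta_A=\{(a,a)\mid a\in A\}$. A quasiorder $\alpha$ on $A$ is a half-space if there is a quasiorder $\beta$ on $A$ with $\alpha\cup\beta=A\times A$ and $\alpha\cap\beta=\Delta_A$. A half-space realizer of a quasiorder $\gamma$ on $A$ is a set $\{\alpha_i\mid i\in I\}$ of half-spaces on $A$ with $\bigcap_{i\in I}\alpha_i=\gamma$; the half-space dimension $\mathrm{hsdim}(A,\gamma)$ is the minimum cardinality of a half-space realizer of $\gamma$. For a quasiorder $\gamma$, $r_\gamma$ is the induced partial order on $A/(\gamma\cap\gamma^{-1})$: $([a],[b])\in r_\gamma$ iff $(a,b)\in\gamma$. For a partial order, $\dim$ denotes the order dimension: the least cardinality of a set of linear extensions whose intersection is the partial order. *)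

theory Defs
  imports Main
begin

definition quasiorder_on :: "'a set \<Rightarrow> 'a rel \<Rightarrow> bool" where
  "quasiorder_on A r \<longleftrightarrow> r \<subseteq> A \<times> A \<and> (\<forall>a\<in>A. (a, a) \<in> r) \<and> trans r"

definition half_space :: "'a set \<Rightarrow> 'a rel \<Rightarrow> bool" where
  "half_space A \<alpha> \<longleftrightarrow> quasiorder_on A \<alpha> \<and>
     (\<exists>\<beta>. quasiorder_on A \<beta> \<and> \<alpha> \<union> \<beta> = A \<times> A \<and> \<alpha> \<inter> \<beta> = Id_on A)"

text \<open>Intersection of a family of relations on A (empty family gives A x A).\<close>
definition hs_realizer :: "'a set \<Rightarrow> 'a rel \<Rightarrow> 'a rel set \<Rightarrow> bool" where
  "hs_realizer A \<gamma> H \<longleftrightarrow> (\<forall>\<alpha>\<in>H. half_space A \<alpha>) \<and> (A \<times> A) \<inter> \<Inter>H = \<gamma>"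

definition partial_order_on' :: "'a set \<Rightarrow> 'a rel \<Rightarrow> bool" where
  "partial_order_on' X r \<longleftrightarrow> quasiorder_on X r \<and> antisym r"

definition linear_order_on' :: "'a set \<Rightarrow> 'a rel \<Rightarrow> bool" where
  "linear_order_on' X r \<longleftrightarrow> partial_order_on' X r \<and> (\<forall>x\<in>X. \<forall>y\<in>X. (x, y) \<in> r \<or> (y, x) \<in> r)"

definition order_realizer :: "'a set \<Rightarrow> 'a rel \<Rightarrow> 'a rel set \<Rightarrow> bool" where
  "order_realizer X r L \<longleftrightarrow> (\<forall>l\<in>L. linear_order_on' X l \<and> r \<subseteq> l) \<and> (X \<times> X) \<inter> \<Inter>L = r"

definition qclasses :: "'a set \<Rightarrow> 'a rel \<Rightarrow> 'a set set" where
  "qclasses A \<gamma> = A // (\<gamma> \<inter> \<gamma>\<inverse>)"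

definition r_of :: "'a set \<Rightarrow> 'a rel \<Rightarrow> 'a set rel" where
  "r_of A \<gamma> = {(X, Y). X \<in> qclasses A \<gamma> \<and> Y \<in> qclasses A \<gamma> \<and>
       (\<exists>a\<in>X. \<exists>b\<in>Y. (a, b) \<in> \<gamma>)}"

end

theory Submission
  imports Defs
begin

lemma hs_of_linear:
  fixes A :: "'a set" and \<gamma> :: "'a rel" and l :: "'a set rel"
  defines "cl \<equiv> \<lambda>a. (\<gamma> \<inter> \<gamma>\<inverse>) `` {a}"
  assumes lin: "linear_order_on' (qclasses A \<gamma>) l"
  shows "half_space A {(a, b). a \<in> A \<and> b \<in> A \<and> (cl a, cl b) \<in> l}"
proof -
  have clX: "cl a \<in> qclasses A \<gamma>" if "a \<in> A" for a
    using that unfolding cl_def qclasses_def by (rule quotientI)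
  have tl: "trans l" and tot: "\<And>x y. x \<in> qclasses A \<gamma> \<Longrightarrow> y \<in> qclasses A \<gamma> \<Longrightarrow> (x, y) \<in> l \<or> (y, x) \<in> l"
    and asl: "antisym l"
    using lin unfolding linear_order_on'_def partial_order_on'_def quasiorder_on_def by auto
  let ?\<alpha> = "{(a, b). a \<in> A \<and> b \<in> A \<and> (cl a, cl b) \<in> l}"
  let ?\<beta> = "{(a, b). a \<in> A \<and> b \<in> A \<and> (cl a, cl b) \<notin> l} \<union> Id_on A"
  have q1: "quasiorder_on A ?\<alpha>"
    unfolding quasiorder_on_def
  proof (intro conjI)
    show "\<forall>a\<in>A. (a, a) \<in> ?\<alpha>" using tot clX by blast
    show "trans ?\<alpha>" using tl unfolding trans_def by blast
  qed auto
  have q2: "quasiorder_on A ?\<beta>"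
    unfolding quasiorder_on_def
  proof (intro conjI)
    show "trans ?\<beta>" unfolding trans_def
    proof (intro allI impI)
      fix x y z assume xy: "(x, y) \<in> ?\<beta>" and yz: "(y, z) \<in> ?\<beta>"
      show "(x, z) \<in> ?\<beta>"
      proof (cases "x = y \<or> y = z")
        case True then show ?thesis using xy yz by auto
      next
        case False
        then have a: "x \<in> A" "y \<in> A" "z \<in> A" "(cl x, cl y) \<notin> l" "(cl y, cl z) \<notin> l"
          using xy yz by (auto simp: Id_on_def)
        have "(cl y, cl x) \<in> l" "(cl z, cl y) \<in> l" using a tot clX by blast+
        then have "(cl z, cl x) \<in> l" using tl by (meson transD)
        have "(cl x, cl z) \<notin> l"
        proof
          assume "(cl x, cl z) \<in> l"
          then have "(cl x, cl y) \<in> l" using \<open>(cl z, cl y) \<in> l\<close> tl by (meson transD)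
          then show False using a by blast
        qed
        then show ?thesis using a by auto
      qed
    qed
  qed (auto simp: Id_on_def)
  have u: "?\<alpha> \<union> ?\<beta> = A \<times> A" by auto
  have i: "?\<alpha> \<inter> ?\<beta> = Id_on A" using q1 unfolding quasiorder_on_def by (auto simp: Id_on_def)
  show ?thesis unfolding half_space_def using q1 q2 u i by blast
qed

theorem corollary2p10:
  fixes A :: "'a set" and \<gamma> :: "'a rel"
  assumes "quasiorder_on A \<gamma>"
  shows "\<forall>L. order_realizer (qclasses A \<gamma>) (r_of A \<gamma>) L \<longrightarrow>
           (\<exists>H. hs_realizer A \<gamma> H \<and> (card_of H, card_of L) \<in> ordLeq)"
proof (intro allI impI)
  fix L assume L: "order_realizer (qclasses A \<gamma>) (r_of A \<gamma>) L"
  define cl where "cl = (\<lambda>a. (\<gamma> \<inter> \<gamma>\<inverse>) `` {a})"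
  define f where "f = (\<lambda>l. {(a, b). a \<in> A \<and> b \<in> A \<and> (cl a, cl b) \<in> l})"
  have clX: "cl a \<in> qclasses A \<gamma>" if "a \<in> A" for a
    using that unfolding cl_def qclasses_def by (rule quotientI)
  have gsub: "\<gamma> \<subseteq> A \<times> A" and tg: "trans \<gamma>" and rg: "\<forall>a\<in>A. (a,a) \<in> \<gamma>"
    using assms unfolding quasiorder_on_def by auto
  have key: "(cl a, cl b) \<in> r_of A \<gamma> \<longleftrightarrow> (a, b) \<in> \<gamma>" if "a \<in> A" "b \<in> A" for a b
  proof
    assume "(cl a, cl b) \<in> r_of A \<gamma>"
    then obtain a' b' where "a' \<in> cl a" "b' \<in> cl b" "(a', b') \<in> \<gamma>" unfolding r_of_def by blast
    then have "(a, a') \<in> \<gamma>" "(b', b) \<in> \<gamma>" "(a', b') \<in> \<gamma>" unfolding cl_def by auto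
    then show "(a, b) \<in> \<gamma>" using tg by (meson transD)
  next
    assume "(a, b) \<in> \<gamma>"
    moreover have "a \<in> cl a" "b \<in> cl b" using that rg unfolding cl_def by auto
    ultimately show "(cl a, cl b) \<in> r_of A \<gamma>" unfolding r_of_def using clX that by blast
  qed
  have Lprop: "\<forall>l\<in>L. linear_order_on' (qclasses A \<gamma>) l"
    and Lint: "(qclasses A \<gamma> \<times> qclasses A \<gamma>) \<inter> \<Inter>L = r_of A \<gamma>"
    using L unfolding order_realizer_def by auto
  have "hs_realizer A \<gamma> (f ` L)"
    unfolding hs_realizer_def
  proof (intro conjI)
    show "\<forall>\<alpha>\<in>f ` L. half_space A \<alpha>"
      using Lprop hs_of_linear unfolding f_def cl_def by blast
    show "A \<times> A \<inter> \<Inter> (f ` L) = \<gamma>"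
    proof (intro set_eqI iffI)
      fix p assume p: "p \<in> A \<times> A \<inter> \<Inter> (f ` L)"
      obtain a b where pab: "p = (a, b)" by fastforce
      have ab: "a \<in> A" "b \<in> A" using p pab by auto
      have "(cl a, cl b) \<in> \<Inter>L" using p pab unfolding f_def by auto
      then have "(cl a, cl b) \<in> r_of A \<gamma>" using Lint clX ab by blast
      then show "p \<in> \<gamma>" using key ab pab by blast
    next
      fix p assume p: "p \<in> \<gamma>"
      obtain a b where pab: "p = (a, b)" by fastforce
      have ab: "a \<in> A" "b \<in> A" using p pab gsub by auto
      have "(cl a, cl b) \<in> r_of A \<gamma>" using key ab p pab by blast
      then have "(cl a, cl b) \<in> \<Inter>L" using Lint by blast
      then show "p \<in> A \<times> A \<inter> \<Inter> (f ` L)" using ab pab unfolding f_def by auto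
    qed
  qed
  moreover have "(card_of (f ` L), card_of L) \<in> ordLeq" by (rule card_of_image)
  ultimately show "\<exists>H. hs_realizer A \<gamma> H \<and> (card_of H, card_of L) \<in> ordLeq" by blast
qed

end
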